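(* Let $a>0$, $b>0$, $q\in(0,1)$ and $t>1$. Then \[ a\gamma - b\ln(1-q) + a\psi(t) - b\psi_q(t) > 0 . \]
   Context: $\gamma$ denotes the Euler–Mascheroni constant and $\psi(t)=\Gamma'(t)/\Gamma(t)$ is the digamma function for $t>0$, where $\Gamma$ is Euler's Gamma function. For $q\in(0,1)$ and $t>0$, the $q$-Gamma function is $\Gamma_q(t)=(1-q)^{1-t}\prod_{n=1}^{\infty}\frac{1-q^n}{1-q^{t+n}}$, and $\psi_q(t)=\frac{d}{dt}\ln\Gamma_q(t)=\Gamma_q'(t)/\Gamma_q(t)$. *)

theory Defs
  imports "HOL-Analysis.Analysis"
begin

definition qGamma :: "real \<Rightarrow> real \<Rightarrow> real" where
  "qGamma q t = (1 - q) powr (1 - t) *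
     (\<Prod>n. (1 - q ^ Suc n) / (1 - q powr (t + real (Suc n))))"

definition qDigamma :: "real \<Rightarrow> real \<Rightarrow> real" where
  "qDigamma q t = deriv (\<lambda>s. ln (qGamma q s)) t"

end

theory Submission
  imports Defs
begin

lemma powr_deriv_aux:
  fixes q c s :: real
  assumes "0 < q" "q powr (s + c) < 1"
  shows "((\<lambda>z. ln (1 - q powr (z + c))) has_real_derivative
     - (q powr (s + c) * ln q / (1 - q powr (s + c)))) (at s within S)"
proof -
  have e: "(\<lambda>z. ln (1 - q powr (z + c))) = (\<lambda>z. ln (1 - exp ((z + c) * ln q)))"
    using assms(1) by (simp add: powr_def)
  have "((\<lambda>z. ln (1 - exp ((z + c) * ln q))) has_real_derivative
     (0 - exp ((s + c) * ln q) * ((1 + 0) * ln q)) / (1 - exp ((s + c) * ln q))) (at s within S)"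
    using assms by (intro derivative_eq_intros) (auto simp: powr_def)
  thus ?thesis unfolding e using assms(1) by (simp add: powr_def)
qed

lemma qdig_bound:
  fixes q t :: real
  assumes q0: "0 < q" and q1: "q < 1" and t0: "t > 0"
  shows "qDigamma q t < - ln (1 - q)"
proof -
  define F where "F n s = (1 - q ^ Suc n) / (1 - q powr (s + real (Suc n)))" for n s
  define f where "f n s = ln (F n s)" for n s
  define f' where "f' n s = ln q * q powr (s + real (Suc n)) / (1 - q powr (s + real (Suc n)))" for n s
  define M where "M n = - ln q * q ^ Suc n / (1 - q)" for n
  have lnq: "ln q < 0" using q0 q1 by simp
  have pw_lt1: "q powr (s + real (Suc n)) < 1" if "s \<ge> 0" for s n
    using q0 q1 that by (simp add: powr01_less_one)
  have pw_le: "q powr (s + real (Suc n)) \<le> q ^ Suc n" if "s \<ge> 0" for s n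
  proof -
    have "q powr (s + real (Suc n)) \<le> q powr (real (Suc n))"
      using q0 q1 that by (intro powr_mono') auto
    also have "q powr (real (Suc n)) = q ^ Suc n" using q0 by (rule powr_realpow)
    finally show ?thesis .
  qed
  have qn1: "q ^ Suc n < 1" for n using q0 q1 by (metis power_strict_decreasing_iff power_0 zero_less_Suc)
  have Fpos: "F n s > 0" if "s \<ge> 0" for n s
    using pw_lt1[OF that, of n] qn1[of n] by (simp add: F_def)
  have deriv_f: "(f n has_field_derivative f' n s) (at s within {0..})" if "s \<in> {0..}" for n s
  proof -
    have s0: "s \<ge> 0" using that by simp
    have h1: "((\<lambda>z. ln (1 - q powr (z + real (Suc n)))) has_real_derivative
         - (q powr (s + real (Suc n)) * ln q / (1 - q powr (s + real (Suc n))))) (at s within {0..})"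
      by (rule powr_deriv_aux) (use pw_lt1[OF s0, of n] q0 in auto)
    have h2: "((\<lambda>s. ln (1 - q ^ Suc n) - ln (1 - q powr (s + real (Suc n)))) has_field_derivative
         f' n s) (at s within {0..})"
      using DERIV_diff[OF DERIV_const[of "ln (1 - q ^ Suc n)"] h1] by (simp add: f'_def mult.commute)
    have h3: "ln (1 - q ^ Suc n) - ln (1 - q powr (x + real (Suc n))) = f n x" if "x \<in> {0..}" for x
      using pw_lt1[of x n] qn1[of n] that by (simp add: f_def F_def ln_div)
    show ?thesis
      by (rule has_field_derivative_transform_within[OF h2 zero_less_one that h3])
  qed
  have normb: "norm (f' n s) \<le> M n" if "s \<in> {0..}" for n s
  proof -
    have s0: "s \<ge> 0" using that by simp
    have a: "0 < 1 - q powr (s + real (Suc n))" using pw_lt1[OF s0, of n] by simp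
    have "norm (f' n s) = - ln q * (q powr (s + real (Suc n)) / (1 - q powr (s + real (Suc n))))"
      using lnq a by (simp add: f'_def abs_mult abs_divide)
    also have "\<dots> \<le> - ln q * (q ^ Suc n / (1 - q))"
    proof (intro mult_left_mono frac_le)
      show "1 - q \<le> 1 - q powr (s + real (Suc n))"
      proof -
        have "q ^ Suc n \<le> q" using q0 q1 by (simp add: mult_left_le power_le_one)
        thus ?thesis using pw_le[OF s0, of n] by linarith
      qed
    qed (use lnq q0 q1 pw_le[OF s0, of n] in auto)
    finally show ?thesis by (simp add: M_def)
  qed
  have sumM: "summable M"
  proof -
    have "summable (\<lambda>n. q ^ Suc n)" using q0 q1 by (simp add: summable_geometric)
    hence "summable (\<lambda>n. (- ln q / (1 - q)) * q ^ Suc n)" by (rule summable_mult)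
    moreover have "M = (\<lambda>n. (- ln q / (1 - q)) * q ^ Suc n)" by (simp add: M_def fun_eq_iff)
    ultimately show ?thesis by simp
  qed
  have unif: "uniformly_convergent_on {0..} (\<lambda>n x. \<Sum>i<n. f' i x)"
    by (rule Weierstrass_m_test'[OF normb sumM])
  have f0: "f n 0 = 0" for n
  proof -
    have "q powr (0 + real (Suc n)) = q ^ Suc n" using powr_realpow[OF q0, of "Suc n"] by simp
    thus ?thesis using qn1[of n] by (simp add: f_def F_def)
  qed
  have sum0: "summable (\<lambda>n. f n 0)" by (simp add: f0)
  have tint: "t \<in> interior {0..}" using t0 by simp
  have summ: "summable (\<lambda>n. f n x)" if "x > 0" for x
    using has_field_derivative_series'(1)[OF convex_real_interval(1) deriv_f unif _ sum0, of x] that by auto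
  have der: "((\<lambda>x. \<Sum>n. f n x) has_field_derivative (\<Sum>n. f' n t)) (at t)"
    using has_field_derivative_series'(2)[OF convex_real_interval(1) deriv_f unif _ sum0 tint] by auto
  have eq: "ln (qGamma q x) = (1 - x) * ln (1 - q) + (\<Sum>n. f n x)" if "x \<in> {0<..}" for x
  proof -
    have x0: "x > 0" using that by simp
    have "(\<Prod>n. (1 - q ^ Suc n) / (1 - q powr (x + real (Suc n)))) = (\<Prod>n. exp (f n x))"
      using Fpos[of x] x0 by (simp add: f_def F_def)
    also have "\<dots> = exp (\<Sum>n. f n x)" by (rule prodinf_exp[OF summ[OF x0]])
    finally have "qGamma q x = (1 - q) powr (1 - x) * exp (\<Sum>n. f n x)" by (simp add: qGamma_def)
    thus ?thesis using q1 by (simp add: ln_mult ln_powr)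
  qed
  have D: "((\<lambda>x. (1 - x) * ln (1 - q) + (\<Sum>n. f n x)) has_field_derivative
           ((0 - 1) * ln (1 - q) + (\<Sum>n. f' n t))) (at t)"
  proof (rule DERIV_add[OF _ der])
    show "((\<lambda>z. (1 - z) * ln (1 - q)) has_real_derivative (0 - 1) * ln (1 - q)) (at t)"
      by (intro DERIV_cmult_right DERIV_diff DERIV_const DERIV_ident)
  qed
  have D2: "((\<lambda>s. ln (qGamma q s)) has_field_derivative (- ln (1 - q) + (\<Sum>n. f' n t))) (at t)"
    using has_field_derivative_transform_within_open[OF D, of "{0<..}" "\<lambda>s. ln (qGamma q s)"] t0 eq by auto
  have qd: "qDigamma q t = - ln (1 - q) + (\<Sum>n. f' n t)"
    unfolding qDigamma_def by (rule DERIV_imp_deriv[OF D2])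
  have neg: "f' n t < 0" for n
  proof -
    have "0 < 1 - q powr (t + real (Suc n))" using pw_lt1[of t n] t0 by simp
    moreover have "q powr (t + real (Suc n)) > 0" using q0 by simp
    ultimately show ?thesis using lnq by (simp add: f'_def mult_neg_pos divide_neg_pos)
  qed
  have sf': "summable (\<lambda>n. f' n t)"
    by (rule summable_comparison_test[OF _ sumM]) (use normb t0 in \<open>auto intro!: exI[of _ 0]\<close>)
  have "0 < (\<Sum>n. - f' n t)"
    by (rule suminf_pos) (use sf' neg in \<open>auto intro: summable_minus\<close>)
  hence "(\<Sum>n. f' n t) < 0" using suminf_minus[OF sf'] by simp
  thus ?thesis using qd by simp
qed

theorem lemma3p3:
  fixes a b q t :: real
  assumes "a > 0" and "b > 0" and "0 < q" and "q < 1" and "t > 1"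
  shows "a * euler_mascheroni - b * ln (1 - q) + a * Digamma t - b * qDigamma q t > 0"
proof -
  have "Digamma (1::real) < Digamma t" using assms by (intro Digamma_real_strict_mono) auto
  hence "0 < a * (euler_mascheroni + Digamma t)" using assms by simp
  moreover have "0 < b * (- ln (1 - q) - qDigamma q t)"
    using qdig_bound[of q t] assms by simp
  ultimately show ?thesis by (simp add: algebra_simps)
qed

end
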